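(* Let $F$ be a saturated minimally unsatisfiable clause-set. Then singular DP-reduction is confluent on $F$, i.e., $|\mathrm{sDP}(F)| = 1$. In other words, the class of saturated minimally unsatisfiable clause-sets is contained in the class of $F \in \mathrm{MU}$ with $|\mathrm{sDP}(F)|=1$.
   Context: Literals are variables $v$ and their complements $\overline{v}$. A clause is a finite set of literals containing no complementary pair; a clause-set is a finite set of clauses. $\mathrm{var}(F)$ is the set of variables occurring in $F$. For a literal $x$, $\mathrm{ldeg}_F(x)$ is the number of clauses of $F$ containing $x$. For a variable $v$, the DP-reduction is $\mathrm{DP}_v(F) := \{C \in F : v \notin \mathrm{var}(C)\} \cup \{(C \cup D)\setminus\{v,\overline{v}\} : C, D \in F,\ C \cap \overline{D} = \{v\}\}$ (where $\overline{D}=\{\overline{y}: y\in D\}$). $\mathrm{MU}$ is the set of minimally unsatisfiable clause-sets (unsatisfiable, but every proper subset is satisfiable). $F \in \mathrm{MU}$ is saturated if for every $C \in F$ and every literal $x$ with $\mathrm{var}(x) \in \mathrm{var}(F)\setminus \mathrm{var}(C)$, the clause-set $(F\setminus\{C\})\cup\{C\cup\{x\}\}$ is satisfiable. A variable $v$ is singular for $F$ if $\min(\mathrm{ldeg}_F(v),\mathrm{ldeg}_F(\overline{v}))=1$; $F$ is nonsingular if it has no singular variable. A singular DP-reduction step is $F \leadsto \mathrm{DP}_v(F)$ for $F\in \mathrm{MU}$ and $v$ singular for $F$ (the result is again in $\mathrm{MU}$). $\mathrm{sDP}(F)$ is the set of nonsingular $F' \in \mathrm{MU}$ obtainable from $F$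 by zero or more singular DP-reduction steps. *)

theory Defs
  imports Main
begin

datatype 'v lit = Pos 'v | Neg 'v

fun comp :: "'v lit \<Rightarrow> 'v lit" where
  "comp (Pos v) = Neg v" | "comp (Neg v) = Pos v"

fun lvar :: "'v lit \<Rightarrow> 'v" where
  "lvar (Pos v) = v" | "lvar (Neg v) = v"

type_synonym 'v clause = "'v lit set"
type_synonym 'v cls = "'v clause set"

definition is_clause :: "'v clause \<Rightarrow> bool" where
  "is_clause C \<longleftrightarrow> finite C \<and> (\<forall>x\<in>C. comp x \<notin> C)"

definition is_clause_set :: "'v cls \<Rightarrow> bool" where
  "is_clause_set F \<longleftrightarrow> finite F \<and> (\<forall>C\<in>F. is_clause C)"

definition var_cl :: "'v clause \<Rightarrow> 'v set" where
  "var_cl C = lvar ` C"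

definition var_cs :: "'v cls \<Rightarrow> 'v set" where
  "var_cs F = (\<Union>C\<in>F. var_cl C)"

fun lit_true :: "('v \<Rightarrow> bool) \<Rightarrow> 'v lit \<Rightarrow> bool" where
  "lit_true \<phi> (Pos v) = \<phi> v" | "lit_true \<phi> (Neg v) = (\<not> \<phi> v)"

definition sat :: "'v cls \<Rightarrow> bool" where
  "sat F \<longleftrightarrow> (\<exists>\<phi>. \<forall>C\<in>F. \<exists>x\<in>C. lit_true \<phi> x)"

definition MU :: "'v cls set" where
  "MU = {F. is_clause_set F \<and> \<not> sat F \<and> (\<forall>F'. F' \<subset> F \<longrightarrow> sat F')}"

definition ldeg :: "'v cls \<Rightarrow> 'v lit \<Rightarrow> nat" where
  "ldeg F x = card {C\<in>F. x \<in> C}"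

definition DP :: "'v \<Rightarrow> 'v cls \<Rightarrow> 'v cls" where
  "DP v F = {C\<in>F. v \<notin> var_cl C} \<union>
     {(C \<union> D) - {Pos v, Neg v} | C D. C \<in> F \<and> D \<in> F \<and> C \<inter> comp ` D = {Pos v}}"

definition saturated :: "'v cls \<Rightarrow> bool" where
  "saturated F \<longleftrightarrow> F \<in> MU \<and>
     (\<forall>C\<in>F. \<forall>x. lvar x \<in> var_cs F - var_cl C \<longrightarrow> sat (insert (C \<union> {x}) (F - {C})))"

definition singular :: "'v \<Rightarrow> 'v cls \<Rightarrow> bool" where
  "singular v F \<longleftrightarrow> min (ldeg F (Pos v)) (ldeg F (Neg v)) = 1"

definition nonsingular :: "'v cls \<Rightarrow> bool" where
  "nonsingular F \<longleftrightarrow> (\<forall>v. \<not> singular v F)"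

definition sDP_step :: "'v cls \<Rightarrow> 'v cls \<Rightarrow> bool" where
  "sDP_step F G \<longleftrightarrow> F \<in> MU \<and> (\<exists>v. singular v F \<and> G = DP v F)"

definition sDP :: "'v cls \<Rightarrow> 'v cls set" where
  "sDP F = {F'. sDP_step\<^sup>*\<^sup>* F F' \<and> F' \<in> MU \<and> nonsingular F'}"

end

theory Submission
  imports Defs
begin


definition cs :: "('v \<Rightarrow> bool) \<Rightarrow> 'v clause \<Rightarrow> bool" where
  "cs \<phi> E \<longleftrightarrow> (\<exists>z\<in>E. lit_true \<phi> z)"

definition mkt :: "('v \<Rightarrow> bool) \<Rightarrow> 'v lit \<Rightarrow> ('v \<Rightarrow> bool)" where
  "mkt \<phi> x = \<phi>(lvar x := (x = Pos (lvar x)))"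

lemma comp_comp[simp]: "comp (comp x) = x" by (cases x) auto
lemma comp_neq[simp]: "comp x \<noteq> x" "x \<noteq> comp x" by (cases x; auto)+
lemma lvar_comp[simp]: "lvar (comp x) = lvar x" by (cases x) auto
lemma lvar_eq: "lvar y = lvar x \<Longrightarrow> y = x \<or> y = comp x"
  by (cases x; cases y) auto
lemma lit_true_comp[simp]: "lit_true \<phi> (comp x) = (\<not> lit_true \<phi> x)" by (cases x) auto
lemma mkt_x[simp]: "lit_true (mkt \<phi> x) x" by (cases x) (auto simp: mkt_def)
lemma mkt_cx[simp]: "lit_true (mkt \<phi> (comp x)) x = False" by (cases x) (auto simp: mkt_def)
lemma mkt_other[simp]: "lvar z \<noteq> lvar x \<Longrightarrow> lit_true (mkt \<phi> x) z = lit_true \<phi> z"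
  by (cases x; cases z) (auto simp: mkt_def)

lemma sat_iff: "sat F \<longleftrightarrow> (\<exists>\<phi>. \<forall>C\<in>F. cs \<phi> C)"
  by (simp add: sat_def cs_def)

lemma var_cl_iff: "lvar y \<in> var_cl E \<longleftrightarrow> y \<in> E \<or> comp y \<in> E"
  unfolding var_cl_def using lvar_eq by (metis image_iff lvar_comp)

lemma MU_clause: "F \<in> MU \<Longrightarrow> E \<in> F \<Longrightarrow> x \<in> E \<Longrightarrow> comp x \<notin> E"
  by (auto simp: MU_def is_clause_set_def is_clause_def)

lemma MU_remove:
  assumes "F \<in> MU" "E \<in> F"
  shows "\<exists>\<phi>. (\<forall>E2\<in>F-{E}. cs \<phi> E2) \<and> \<not> cs \<phi> E"
proof -
  have "F - {E} \<subset> F" using assms by auto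
  hence "sat (F - {E})" using assms by (auto simp: MU_def)
  then obtain \<phi> where p: "\<forall>E2\<in>F-{E}. cs \<phi> E2" by (auto simp: sat_iff)
  have "\<not> sat F" using assms by (auto simp: MU_def)
  hence "\<not> cs \<phi> E" using p assms(2) by (auto simp: sat_iff)
  thus ?thesis using p by blast
qed

lemma sat_ext:
  assumes "saturated F" "E \<in> F" "lvar y \<in> var_cs F" "lvar y \<notin> var_cl E"
  shows "\<exists>\<psi>. (\<forall>E2\<in>F-{E}. cs \<psi> E2) \<and> \<not> cs \<psi> E \<and> lit_true \<psi> y"
proof -
  from assms have "sat (insert (E \<union> {y}) (F - {E}))" by (auto simp: saturated_def)
  then obtain \<psi> where p: "\<forall>E2\<in>insert (E \<union> {y}) (F - {E}). cs \<psi> E2" by (auto simp: sat_iff)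
  have "\<not> sat F" using assms by (auto simp: saturated_def MU_def)
  hence n: "\<not> cs \<psi> E" using p assms(2) by (auto simp: sat_iff)
  moreover have "lit_true \<psi> y" using p n by (auto simp: cs_def)
  ultimately show ?thesis using p by blast
qed

lemma no_pure:
  assumes "F \<in> MU" "E \<in> F" "y \<in> E"
  shows "\<exists>D\<in>F. comp y \<in> D"
proof (rule ccontr)
  assume a: "\<not> ?thesis"
  obtain \<phi> where p: "\<forall>E2\<in>F-{E}. cs \<phi> E2" using MU_remove[OF assms(1,2)] by blast
  have "\<forall>E2\<in>F. cs (mkt \<phi> y) E2"
  proof
    fix E2 assume e: "E2 \<in> F"
    show "cs (mkt \<phi> y) E2"
    proof (cases "y \<in> E2")
      case True thus ?thesis by (auto simp: cs_def intro!: bexI[of _ y])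
    next
      case False
      hence "E2 \<noteq> E" using assms by auto
      then obtain z where z: "z \<in> E2" "lit_true \<phi> z" using p e by (auto simp: cs_def)
      have "lvar z \<noteq> lvar y" using lvar_eq[of z y] z False a e by auto
      thus ?thesis using z by (auto simp: cs_def intro!: bexI[of _ z])
    qed
  qed
  hence "sat F" by (auto simp: sat_iff)
  thus False using assms by (auto simp: MU_def)
qed

lemma L1:
  assumes s: "saturated F" and u: "{E\<in>F. x\<in>E} = {C}" and d: "D \<in> F" "comp x \<in> D"
  shows "C - {x} \<subseteq> D"
proof
  fix y assume y: "y \<in> C - {x}"
  have mu: "F \<in> MU" using s by (simp add: saturated_def)
  have C: "C \<in> F" "x \<in> C" using u by auto
  have lv: "lvar y \<noteq> lvar x" using lvar_eq[of y x] y MU_clause[OF mu C] by auto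
  have key: "\<not> lit_true \<phi> y" if h1: "\<forall>E\<in>F-{D}. cs \<phi> E" and h2: "\<not> cs \<phi> D" for \<phi>
  proof -
    let ?p = "mkt \<phi> (comp x)"
    have "\<forall>E\<in>F-{C}. cs ?p E"
    proof
      fix E assume e: "E \<in> F - {C}"
      show "cs ?p E"
      proof (cases "E = D")
        case True thus ?thesis using d by (auto simp: cs_def intro!: bexI[of _ "comp x"])
      next
        case False
        then obtain z where z: "z \<in> E" "lit_true \<phi> z" using h1 e by (auto simp: cs_def)
        have "z \<noteq> x" using z e u by auto
        moreover have "z \<noteq> comp x" using z h2 d by (auto simp: cs_def)
        ultimately have "lvar z \<noteq> lvar (comp x)" using lvar_eq[of z x] by auto
        thus ?thesis using z by (auto simp: cs_def intro!: bexI[of _ z])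
      qed
    qed
    moreover have "\<not> sat F" using mu by (auto simp: MU_def)
    ultimately have "\<not> cs ?p C" using C by (auto simp: sat_iff)
    thus ?thesis using y lv by (auto simp: cs_def)
  qed
  show "y \<in> D"
  proof (rule ccontr)
    assume yn: "y \<notin> D"
    show False
    proof (cases "comp y \<in> D")
      case True
      obtain \<phi> where p: "\<forall>E2\<in>F-{D}. cs \<phi> E2" "\<not> cs \<phi> D" using MU_remove[OF mu d(1)] by blast
      have "lit_true \<phi> y" using p(2) True by (auto simp: cs_def)
      thus False using key p by blast
    next
      case False
      hence "lvar y \<notin> var_cl D" using yn var_cl_iff by blast
      moreover have "lvar y \<in> var_cs F" using y C by (auto simp: var_cs_def var_cl_def)
      ultimately obtain \<psi> where "\<forall>E2\<in>F-{D}. cs \<psi> E2" "\<not> cs \<psi> D" "lit_true \<psi> y"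
        using sat_ext[OF s d(1)] by blast
      thus False using key by blast
    qed
  qed
qed



definition asg :: "'v lit \<Rightarrow> 'v cls \<Rightarrow> 'v cls" where
  "asg x F = (\<lambda>E. E - {comp x}) ` {E\<in>F. x \<notin> E}"

lemma pn: "{Pos (lvar x), Neg (lvar x)} = {x, comp x}" by (cases x) auto

lemma comp_eq_iff: "comp z = y \<longleftrightarrow> z = comp y" by (cases z; cases y) auto

lemma DP_I1: "E \<in> F \<Longrightarrow> v \<notin> var_cl E \<Longrightarrow> E \<in> DP v F"
  unfolding DP_def by simp
lemma DP_I2: "C \<in> F \<Longrightarrow> D \<in> F \<Longrightarrow> C \<inter> comp ` D = {Pos v} \<Longrightarrow> (C \<union> D) - {Pos v, Neg v} \<in> DP v F"
  unfolding DP_def by blast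
lemma DP_E: "E \<in> DP v F \<Longrightarrow> (E \<in> F \<Longrightarrow> v \<notin> var_cl E \<Longrightarrow> P) \<Longrightarrow>
  (\<And>C D. E = (C \<union> D) - {Pos v, Neg v} \<Longrightarrow> C \<in> F \<Longrightarrow> D \<in> F \<Longrightarrow> C \<inter> comp ` D = {Pos v} \<Longrightarrow> P) \<Longrightarrow> P"
  unfolding DP_def by blast

lemma asg_I: "E \<in> F \<Longrightarrow> x \<notin> E \<Longrightarrow> E' = E - {comp x} \<Longrightarrow> E' \<in> asg x F"
  unfolding asg_def by blast

lemma LA:
  assumes s: "saturated F" and u: "{E\<in>F. x\<in>E} = {C}"
  shows "DP (lvar x) F = asg x F"
proof -
  have mu: "F \<in> MU" using s by (simp add: saturated_def)
  have C: "C \<in> F" "x \<in> C" using u by auto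
  have uC: "\<And>E. E \<in> F \<Longrightarrow> x \<in> E \<Longrightarrow> E = C" using u by (metis (mono_tags, lifting) mem_Collect_eq singletonD)
  have ncx: "comp x \<notin> C" using MU_clause[OF mu C] .
  have sub: "\<And>D. D \<in> F \<Longrightarrow> comp x \<in> D \<Longrightarrow> C - {x} \<subseteq> D" using L1[OF s u] by blast
  have res: "(C \<union> D) - {Pos (lvar x), Neg (lvar x)} = D - {comp x}" if "D \<in> F" "comp x \<in> D" for D
  proof -
    have "x \<notin> D" using MU_clause[OF mu that] by auto
    thus ?thesis using sub[OF that] C unfolding pn by auto
  qed
  show ?thesis
  proof (rule equalityI)
    show "DP (lvar x) F \<subseteq> asg x F"
    proof (rule subsetI)
      fix E assume "E \<in> DP (lvar x) F"
      then consider (a) "E \<in> F" "lvar x \<notin> var_cl E"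
        | (b) E1 E2 where "E = (E1 \<union> E2) - {Pos (lvar x), Neg (lvar x)}" "E1 \<in> F" "E2 \<in> F"
              "E1 \<inter> comp ` E2 = {Pos (lvar x)}"
        by (rule DP_E) blast+
      thus "E \<in> asg x F"
      proof cases
        case a
        hence "x \<notin> E" "comp x \<notin> E" using var_cl_iff[of x E] by auto
        hence "E = E - {comp x}" by auto
        thus ?thesis using asg_I[OF a(1) \<open>x \<notin> E\<close>] by blast
      next
        case b
        have p1: "Pos (lvar x) \<in> E1" using b(4) by blast
        have "Pos (lvar x) \<in> comp ` E2" using b(4) by (metis Int_iff insertI1)
        then obtain z where "z \<in> E2" "Pos (lvar x) = comp z" by (rule imageE)
        hence p2: "Neg (lvar x) \<in> E2" by (metis comp_comp comp.simps(1))
        have "(x \<in> E1 \<and> comp x \<in> E2) \<or> (x \<in> E2 \<and> comp x \<in> E1)"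
          using p1 p2 by (cases x) auto
        thus ?thesis
        proof
          assume h: "x \<in> E1 \<and> comp x \<in> E2"
          hence "E1 = C" using uC[OF b(2)] by blast
          hence "E = E2 - {comp x}" using res[OF b(3)] b(1) h by simp
          moreover have "x \<notin> E2" using MU_clause[OF mu b(3)] h by blast
          ultimately show ?thesis using asg_I[OF b(3)] by blast
        next
          assume h: "x \<in> E2 \<and> comp x \<in> E1"
          hence "E2 = C" using uC[OF b(3)] by blast
          hence "E = E1 - {comp x}" using res[OF b(2)] b(1) h by (simp add: Un_commute)
          moreover have "x \<notin> E1" using MU_clause[OF mu b(2)] h by blast
          ultimately show ?thesis using asg_I[OF b(2)] by blast
        qed
      qed
    qed
  next
    show "asg x F \<subseteq> DP (lvar x) F"
    proof (rule subsetI)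
      fix E' assume "E' \<in> asg x F"
      then obtain E where e: "E \<in> F" "x \<notin> E" "E' = E - {comp x}" unfolding asg_def by blast
      show "E' \<in> DP (lvar x) F"
      proof (cases "comp x \<in> E")
        case False
        hence "lvar x \<notin> var_cl E" using e var_cl_iff by blast
        moreover have "E' = E" using e False by auto
        ultimately show ?thesis using e by (simp add: DP_I1)
      next
        case True
        have eq: "E' = (C \<union> E) - {Pos (lvar x), Neg (lvar x)}" using res[OF e(1) True] e by simp
        have cl: "\<And>z. z \<in> E \<Longrightarrow> comp z \<notin> E" using MU_clause[OF mu e(1)] .
        have clC: "\<And>z. z \<in> C \<Longrightarrow> comp z \<notin> C" using MU_clause[OF mu C(1)] .
        have sC: "C - {x} \<subseteq> E" using sub[OF e(1) True] .
        show ?thesis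
        proof (cases x)
          case (Pos v)
          have "C \<inter> comp ` E = {Pos (lvar x)}"
          proof (rule set_eqI, rule iffI)
            fix y assume "y \<in> C \<inter> comp ` E"
            then obtain z where z: "y \<in> C" "z \<in> E" "y = comp z" by blast
            show "y \<in> {Pos (lvar x)}"
            proof (rule ccontr)
              assume "y \<notin> {Pos (lvar x)}"
              hence "y \<noteq> x" using Pos by simp
              hence "y \<in> E" using sC z by blast
              thus False using cl z by simp
            qed
          next
            fix y assume "y \<in> {Pos (lvar x)}"
            hence "y = x" "comp y \<in> E" using Pos True by auto
            thus "y \<in> C \<inter> comp ` E" using C by (auto intro!: image_eqI[of _ comp "comp y"])
          qed
          thus ?thesis unfolding eq using e C by (simp add: DP_I2)
        next
          case (Neg v)
          have "E \<inter> comp ` C = {Pos (lvar x)}"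
          proof (rule set_eqI, rule iffI)
            fix y assume "y \<in> E \<inter> comp ` C"
            then obtain z where z: "y \<in> E" "z \<in> C" "y = comp z" by blast
            show "y \<in> {Pos (lvar x)}"
            proof (rule ccontr)
              assume "y \<notin> {Pos (lvar x)}"
              hence "z \<noteq> x" using Neg z by auto
              hence "z \<in> E" using sC z by blast
              thus False using cl z by simp
            qed
          next
            fix y assume "y \<in> {Pos (lvar x)}"
            hence "y = comp x" using Neg by auto
            thus "y \<in> E \<inter> comp ` C" using C True by auto
          qed
          moreover have "E' = (E \<union> C) - {Pos (lvar x), Neg (lvar x)}" using eq by (simp add: Un_commute)
          ultimately show ?thesis using e C DP_I2 by metis
        qed
      qed
    qed
  qed
qed



lemma lift: assumes "lit_true \<psi> x" "cs \<psi> E" shows "cs \<psi> (E - {comp x})"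
proof -
  obtain z where z: "z \<in> E" "lit_true \<psi> z" using assms(2) unfolding cs_def by blast
  have "z \<noteq> comp x" using z(2) assms(1) by auto
  thus ?thesis using z unfolding cs_def by blast
qed

lemma sat_mono: "F' \<subseteq> G \<Longrightarrow> sat G \<Longrightarrow> sat F'" unfolding sat_def by blast

lemma asg_E: "E' \<in> asg x F \<Longrightarrow> (\<And>E. E \<in> F \<Longrightarrow> x \<notin> E \<Longrightarrow> E' = E - {comp x} \<Longrightarrow> P) \<Longrightarrow> P"
  unfolding asg_def by blast

lemma asg_nolit: "E' \<in> asg x F \<Longrightarrow> x \<notin> E' \<and> comp x \<notin> E'"
  by (erule asg_E) auto

lemma var_asg: "var_cs (asg x F) \<subseteq> var_cs F - {lvar x}"
proof
  fix v assume "v \<in> var_cs (asg x F)"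
  then obtain E' z where e: "E' \<in> asg x F" "z \<in> E'" "v = lvar z"
    unfolding var_cs_def var_cl_def by blast
  obtain E where E: "E \<in> F" "x \<notin> E" "E' = E - {comp x}" by (rule asg_E[OF e(1)])
  have "z \<noteq> x" "z \<noteq> comp x" using asg_nolit[OF e(1)] e(2) by auto
  hence "v \<noteq> lvar x" using e(3) lvar_eq[of z x] by auto
  moreover have "z \<in> E" using E(3) e(2) by simp
  hence "v \<in> var_cl E" using e(3) unfolding var_cl_def by simp
  hence "v \<in> var_cs F" using E(1) unfolding var_cs_def by blast
  ultimately show "v \<in> var_cs F - {lvar x}" by blast
qed

lemma LB:
  assumes s: "saturated F" and u: "{E\<in>F. x\<in>E} = {C}"
  shows "saturated (asg x F)"
proof -
  let ?G = "asg x F"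
  have mu: "F \<in> MU" using s by (simp add: saturated_def)
  have C: "C \<in> F" "x \<in> C" using u by auto
  have uC: "\<And>E. E \<in> F \<Longrightarrow> x \<in> E \<Longrightarrow> E = C" using u by (metis (mono_tags, lifting) mem_Collect_eq singletonD)
  have ncx: "comp x \<notin> C" using MU_clause[OF mu C] .
  have xF: "lvar x \<in> var_cs F" using C unfolding var_cs_def var_cl_def by blast
  have unsF: "\<not> sat F" using mu by (simp add: MU_def)
  have csF: "is_clause_set F" using mu by (simp add: MU_def)
  have cert: "\<exists>\<psi>. (\<forall>E2\<in>F-{E}. cs \<psi> E2) \<and> lit_true \<psi> x"
    if E: "E \<in> F" "x \<notin> E" for E
  proof (cases "comp x \<in> E")
    case True
    obtain \<phi> where p: "\<forall>E2\<in>F-{E}. cs \<phi> E2" "\<not> cs \<phi> E" using MU_remove[OF mu E(1)] by blast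
    have "\<not> lit_true \<phi> (comp x)" using p(2) True unfolding cs_def by blast
    hence "lit_true \<phi> x" by simp
    thus ?thesis using p(1) by blast
  next
    case False
    hence "lvar x \<notin> var_cl E" using E var_cl_iff by blast
    thus ?thesis using sat_ext[OF s E(1) xF] by blast
  qed
  have cl: "is_clause_set ?G"
  proof -
    have "finite ?G" using csF unfolding asg_def is_clause_set_def by simp
    moreover have "\<forall>E'\<in>?G. is_clause E'"
    proof
      fix E' assume "E' \<in> ?G"
      then obtain E where E: "E \<in> F" "E' = E - {comp x}" by (rule asg_E)
      hence "is_clause E" using csF by (simp add: is_clause_set_def)
      thus "is_clause E'" using E unfolding is_clause_def by auto
    qed
    ultimately show ?thesis by (simp add: is_clause_set_def)
  qed
  have uns: "\<not> sat ?G"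
  proof
    assume "sat ?G"
    then obtain \<phi> where p: "\<forall>E'\<in>?G. cs \<phi> E'" by (auto simp: sat_iff)
    have "\<forall>E\<in>F. cs (mkt \<phi> x) E"
    proof
      fix E assume E: "E \<in> F"
      show "cs (mkt \<phi> x) E"
      proof (cases "x \<in> E")
        case True thus ?thesis by (auto simp: cs_def intro!: bexI[of _ x])
      next
        case False
        hence "E - {comp x} \<in> ?G" using E asg_I by blast
        hence "cs \<phi> (E - {comp x})" using p by blast
        then obtain z where z: "z \<in> E" "z \<noteq> comp x" "lit_true \<phi> z" unfolding cs_def by blast
        have "z \<noteq> x" using z False by auto
        hence "lvar z \<noteq> lvar x" using z lvar_eq by blast
        thus ?thesis using z by (auto simp: cs_def intro!: bexI[of _ z])
      qed
    qed
    thus False using unsF by (auto simp: sat_iff)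
  qed
  have rem: "sat (?G - {E'})" if E': "E' \<in> ?G" for E'
  proof -
    obtain E where E: "E \<in> F" "x \<notin> E" "E' = E - {comp x}" using E' by (rule asg_E)
    obtain \<psi> where p: "\<forall>E2\<in>F-{E}. cs \<psi> E2" "lit_true \<psi> x" using cert[OF E(1,2)] by blast
    have "\<forall>E2'\<in>?G - {E'}. cs \<psi> E2'"
    proof
      fix E2' assume h: "E2' \<in> ?G - {E'}"
      then obtain E2 where E2: "E2 \<in> F" "x \<notin> E2" "E2' = E2 - {comp x}" by (blast elim: asg_E)
      have "E2 \<noteq> E" using E2(3) E(3) h by auto
      hence "cs \<psi> E2" using p(1) E2(1) by blast
      thus "cs \<psi> E2'" using lift[OF p(2)] E2(3) by simp
    qed
    thus ?thesis by (auto simp: sat_iff)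
  qed
  have min: "\<forall>F'. F' \<subset> ?G \<longrightarrow> sat F'"
  proof (intro allI impI)
    fix F' assume "F' \<subset> ?G"
    then obtain E' where e: "E' \<in> ?G" "E' \<notin> F'" by blast
    have "F' \<subseteq> ?G - {E'}" using \<open>F' \<subset> ?G\<close> e(2) by blast
    thus "sat F'" using rem[OF e(1)] sat_mono by blast
  qed
  have muG: "?G \<in> MU" using cl uns min by (simp add: MU_def)
  have ext: "sat (insert (E' \<union> {y}) (?G - {E'}))"
    if E': "E' \<in> ?G" and y: "lvar y \<in> var_cs ?G - var_cl E'" for E' y
  proof -
    obtain E where E: "E \<in> F" "x \<notin> E" "E' = E - {comp x}" using E' by (rule asg_E)
    have "lvar y \<in> var_cs F - {lvar x}" using y var_asg[of x F] by (meson DiffD1 subsetD)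
    hence yx: "lvar y \<noteq> lvar x" and yF: "lvar y \<in> var_cs F" by auto
    have "lvar y \<notin> var_cl E"
    proof
      assume "lvar y \<in> var_cl E"
      hence "y \<in> E \<or> comp y \<in> E" using var_cl_iff by blast
      moreover have "y \<noteq> comp x" "comp y \<noteq> comp x" using yx by (metis lvar_comp)+
      ultimately have "y \<in> E' \<or> comp y \<in> E'" using E by auto
      hence "lvar y \<in> var_cl E'" using var_cl_iff by blast
      thus False using y by blast
    qed
    then obtain \<psi> where p: "\<forall>E2\<in>F-{E}. cs \<psi> E2" "\<not> cs \<psi> E" "lit_true \<psi> y"
      using sat_ext[OF s E(1) yF] by blast
    have "\<exists>\<psi>'. (\<forall>E2\<in>F-{E}. cs \<psi>' E2) \<and> lit_true \<psi>' x \<and> lit_true \<psi>' y"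
    proof (cases "lit_true \<psi> x")
      case True thus ?thesis using p by blast
    next
      case nx: False
      have ncE: "comp x \<notin> E" using p(2) nx by (auto simp: cs_def)
      let ?q = "mkt \<psi> x"
      have "\<forall>E2\<in>F-{E}. cs ?q E2"
      proof
        fix E2 assume E2: "E2 \<in> F - {E}"
        show "cs ?q E2"
        proof (cases "x \<in> E2")
          case True thus ?thesis by (auto simp: cs_def intro!: bexI[of _ x])
        next
          case False
          obtain z where z: "z \<in> E2" "lit_true \<psi> z" using p(1) E2 by (auto simp: cs_def)
          show ?thesis
          proof (cases "lvar z = lvar x")
            case False thus ?thesis using z by (auto simp: cs_def intro!: bexI[of _ z])
          next
            case True
            hence "z = comp x" using z \<open>x \<notin> E2\<close> lvar_eq by blast
            hence sub: "C - {x} \<subseteq> E2" using L1[OF s u] E2 z by blast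
            have "C \<noteq> E" using C E by blast
            hence "cs \<psi> C" using p(1) C by blast
            then obtain w where w: "w \<in> C" "lit_true \<psi> w" by (auto simp: cs_def)
            have "w \<noteq> x" using w nx by auto
            hence "w \<in> E2" "lvar w \<noteq> lvar x" using sub w ncx lvar_eq by blast+
            thus ?thesis using w by (auto simp: cs_def intro!: bexI[of _ w])
          qed
        qed
      qed
      moreover have "lit_true ?q y" using p(3) yx by simp
      ultimately show ?thesis using mkt_x by blast
    qed
    then obtain \<psi>' where q: "\<forall>E2\<in>F-{E}. cs \<psi>' E2" "lit_true \<psi>' x" "lit_true \<psi>' y" by blast
    have "\<forall>E2'\<in>insert (E' \<union> {y}) (?G - {E'}). cs \<psi>' E2'"
    proof
      fix E2' assume h: "E2' \<in> insert (E' \<union> {y}) (?G - {E'})"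
      show "cs \<psi>' E2'"
      proof (cases "E2' = E' \<union> {y}")
        case True thus ?thesis using q(3) by (auto simp: cs_def)
      next
        case False
        hence "E2' \<in> ?G - {E'}" using h by blast
        then obtain E2 where E2: "E2 \<in> F" "x \<notin> E2" "E2' = E2 - {comp x}" by (blast elim: asg_E)
        have "E2 \<noteq> E" using E2(3) E(3) \<open>E2' \<in> ?G - {E'}\<close> by auto
        hence "cs \<psi>' E2" using q(1) E2(1) by blast
        thus "cs \<psi>' E2'" using lift[OF q(2)] E2(3) by simp
      qed
    qed
    thus ?thesis by (auto simp: sat_iff)
  qed
  show ?thesis unfolding saturated_def using muG ext by blast
qed



lemma asg2: "lvar x \<noteq> lvar y \<Longrightarrow>
  E \<in> asg x (asg y F) \<longleftrightarrow> (\<exists>E0\<in>F. y \<notin> E0 \<and> x \<notin> E0 \<and> E = E0 - {comp y, comp x})"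
proof
  assume n: "lvar x \<noteq> lvar y" and "E \<in> asg x (asg y F)"
  then obtain E1 where E1: "E1 \<in> asg y F" "x \<notin> E1" "E = E1 - {comp x}" by (blast elim: asg_E)
  then obtain E0 where E0: "E0 \<in> F" "y \<notin> E0" "E1 = E0 - {comp y}" by (blast elim: asg_E)
  have "x \<noteq> comp y" using n by (metis lvar_comp)
  hence "x \<notin> E0" using E1(2) E0(3) by auto
  moreover have "E = E0 - {comp y, comp x}" using E1(3) E0(3) by auto
  ultimately show "\<exists>E0\<in>F. y \<notin> E0 \<and> x \<notin> E0 \<and> E = E0 - {comp y, comp x}" using E0 by blast
next
  assume n: "lvar x \<noteq> lvar y" and "\<exists>E0\<in>F. y \<notin> E0 \<and> x \<notin> E0 \<and> E = E0 - {comp y, comp x}"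
  then obtain E0 where E0: "E0 \<in> F" "y \<notin> E0" "x \<notin> E0" "E = E0 - {comp y, comp x}" by blast
  have 1: "E0 - {comp y} \<in> asg y F" using asg_I E0 by blast
  have "x \<notin> E0 - {comp y}" using E0 by blast
  moreover have "E = (E0 - {comp y}) - {comp x}" using E0(4) by auto
  ultimately show "E \<in> asg x (asg y F)" using asg_I[OF 1] by blast
qed

lemma asg_comm: "lvar x \<noteq> lvar y \<Longrightarrow> asg x (asg y F) = asg y (asg x F)"
proof (rule set_eqI)
  fix E assume n: "lvar x \<noteq> lvar y"
  have n2: "lvar y \<noteq> lvar x" using n by simp
  show "E \<in> asg x (asg y F) \<longleftrightarrow> E \<in> asg y (asg x F)"
    unfolding asg2[OF n] asg2[OF n2] by (metis insert_commute)
qed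

lemma sing_lit:
  assumes "singular v F" "finite F"
  shows "\<exists>x. lvar x = v \<and> (\<exists>C. {E\<in>F. x\<in>E} = {C}) \<and> (\<exists>D\<in>F. comp x \<in> D)"
proof -
  have fin: "\<And>x. finite {E\<in>F. x\<in>E}" using assms(2) by simp
  have key: "\<exists>C. {E\<in>F. x\<in>E} = {C}" "\<exists>D\<in>F. comp x \<in> D"
    if "ldeg F x = 1" "ldeg F (comp x) \<ge> 1" for x
  proof -
    show "\<exists>C. {E\<in>F. x\<in>E} = {C}" using that(1) unfolding ldeg_def by (simp add: card_1_singleton_iff)
    have "{E\<in>F. comp x\<in>E} \<noteq> {}" using that(2) unfolding ldeg_def by (metis card.empty not_one_le_zero)
    thus "\<exists>D\<in>F. comp x \<in> D" by blast
  qed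
  from assms(1) have "(ldeg F (Pos v) = 1 \<and> ldeg F (Neg v) \<ge> 1) \<or> (ldeg F (Neg v) = 1 \<and> ldeg F (Pos v) \<ge> 1)"
    unfolding singular_def by (metis min_def nle_le)
  thus ?thesis
  proof
    assume h: "ldeg F (Pos v) = 1 \<and> ldeg F (Neg v) \<ge> 1"
    show ?thesis using key[of "Pos v"] h by (intro exI[of _ "Pos v"]) simp
  next
    assume h: "ldeg F (Neg v) = 1 \<and> ldeg F (Pos v) \<ge> 1"
    show ?thesis using key[of "Neg v"] h by (intro exI[of _ "Neg v"]) simp
  qed
qed

lemma lit_sing:
  assumes "finite F" "{E\<in>F. y\<in>E} = {C}" "D \<in> F" "comp y \<in> D"
  shows "singular (lvar y) F"
proof -
  have 1: "ldeg F y = 1" using assms(2) unfolding ldeg_def by simp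
  have "{E\<in>F. comp y\<in>E} \<noteq> {}" using assms(3,4) by blast
  moreover have "finite {E\<in>F. comp y\<in>E}" using assms(1) by simp
  ultimately have 2: "ldeg F (comp y) \<ge> 1" unfolding ldeg_def
    by (metis One_nat_def Suc_leI card_gt_0_iff)
  show ?thesis
  proof (cases y)
    case (Pos v) thus ?thesis using 1 2 unfolding singular_def by simp
  next
    case (Neg v) thus ?thesis using 1 2 unfolding singular_def by simp
  qed
qed

lemma sat_fin: "saturated F \<Longrightarrow> finite F"
  by (simp add: saturated_def MU_def is_clause_set_def)

lemma step_to:
  assumes "saturated F" "sDP_step F G"
  shows "\<exists>x C. {E\<in>F. x\<in>E} = {C} \<and> (\<exists>D\<in>F. comp x \<in> D) \<and> G = asg x F"
proof -
  obtain v where v: "singular v F" "G = DP v F" using assms(2) unfolding sDP_step_def by blast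
  obtain x C where x: "lvar x = v" "{E\<in>F. x\<in>E} = {C}" "\<exists>D\<in>F. comp x \<in> D"
    using sing_lit[OF v(1) sat_fin[OF assms(1)]] by blast
  have "G = asg x F" using v(2) LA[OF assms(1) x(2)] x(1) by simp
  thus ?thesis using x by blast
qed

lemma step_from:
  assumes "saturated F" "{E\<in>F. x\<in>E} = {C}" "D \<in> F" "comp x \<in> D"
  shows "sDP_step F (asg x F)"
proof -
  have "singular (lvar x) F" using lit_sing[OF sat_fin[OF assms(1)] assms(2-4)] .
  moreover have "F \<in> MU" using assms(1) by (simp add: saturated_def)
  ultimately show ?thesis unfolding sDP_step_def using LA[OF assms(1,2)] by metis
qed

lemma step_sat: "saturated F \<Longrightarrow> sDP_step F G \<Longrightarrow> saturated G"
  using step_to LB by metis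

lemma fin_var: "saturated F \<Longrightarrow> finite (var_cs F)"
  unfolding saturated_def MU_def is_clause_set_def is_clause_def var_cs_def var_cl_def by auto

lemma step_card:
  assumes "saturated F" "sDP_step F G"
  shows "card (var_cs G) < card (var_cs F)"
proof -
  obtain x C where x: "{E\<in>F. x\<in>E} = {C}" "G = asg x F" using step_to[OF assms] by blast
  have "C \<in> F" "x \<in> C" using x(1) by auto
  hence "lvar x \<in> var_cs F" unfolding var_cs_def var_cl_def by blast
  hence "var_cs G \<subset> var_cs F" using var_asg[of x F] x(2) by blast
  thus ?thesis using fin_var[OF assms(1)] by (simp add: psubset_card_mono)
qed

lemma LD:
  assumes s: "saturated F" and u: "{E\<in>F. x\<in>E} = {C}" and d: "D \<in> F" "comp x \<in> D"
    and uy: "{E\<in>F. y\<in>E} = {Cy}" and n: "lvar y \<noteq> lvar x"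
  shows "{E\<in>asg x F. y\<in>E} = {Cy - {comp x}}"
proof -
  have mu: "F \<in> MU" using s by (simp add: saturated_def)
  have Cy: "Cy \<in> F" "y \<in> Cy" using uy by auto
  have C: "C \<in> F" "x \<in> C" using u by auto
  have yx: "y \<noteq> x" "y \<noteq> comp x" using n by (metis lvar_comp)+
  have "x \<notin> Cy"
  proof
    assume "x \<in> Cy"
    hence "Cy = C" using u Cy by blast
    hence "y \<in> C - {x}" using Cy yx by blast
    hence "y \<in> D" using L1[OF s u d] by blast
    hence "D = Cy" using uy d by blast
    thus False using \<open>Cy = C\<close> C d MU_clause[OF mu] by blast
  qed
  hence in1: "Cy - {comp x} \<in> asg x F" using asg_I Cy by blast
  show ?thesis
  proof (rule set_eqI, rule iffI)
    fix E' assume h: "E' \<in> {E\<in>asg x F. y\<in>E}"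
    then obtain E where E: "E \<in> F" "E' = E - {comp x}" by (blast elim: asg_E)
    have "y \<in> E" using h E(2) by simp
    hence "E = Cy" using uy E(1) by blast
    thus "E' \<in> {Cy - {comp x}}" using E(2) by simp
  next
    fix E' assume "E' \<in> {Cy - {comp x}}"
    thus "E' \<in> {E\<in>asg x F. y\<in>E}" using in1 Cy yx by simp
  qed
qed

lemma diamond:
  assumes s: "saturated F" and 1: "sDP_step F G1" and 2: "sDP_step F G2"
  shows "G1 = G2 \<or> (\<exists>H. sDP_step G1 H \<and> sDP_step G2 H)"
proof -
  obtain x C where x: "{E\<in>F. x\<in>E} = {C}" "\<exists>D\<in>F. comp x \<in> D" "G1 = asg x F"
    using step_to[OF s 1] by blast
  obtain y Cy where y: "{E\<in>F. y\<in>E} = {Cy}" "\<exists>D\<in>F. comp y \<in> D" "G2 = asg y F"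
    using step_to[OF s 2] by blast
  show ?thesis
  proof (cases "lvar x = lvar y")
    case True
    have "G1 = DP (lvar x) F" using LA[OF s x(1)] x(3) by simp
    moreover have "G2 = DP (lvar y) F" using LA[OF s y(1)] y(3) by simp
    ultimately show ?thesis using True by simp
  next
    case False
    have s1: "saturated G1" using step_sat[OF s 1] .
    have s2: "saturated G2" using step_sat[OF s 2] .
    obtain Dx where Dx: "Dx \<in> F" "comp x \<in> Dx" using x(2) by blast
    obtain Dy where Dy: "Dy \<in> F" "comp y \<in> Dy" using y(2) by blast
    have u1: "{E\<in>G1. y\<in>E} = {Cy - {comp x}}" using LD[OF s x(1) Dx y(1)] False x(3) by simp
    have u2: "{E\<in>G2. x\<in>E} = {C - {comp y}}" using LD[OF s y(1) Dy x(1)] False y(3) by simp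
    have mu1: "G1 \<in> MU" using s1 by (simp add: saturated_def)
    have mu2: "G2 \<in> MU" using s2 by (simp add: saturated_def)
    have a1: "Cy - {comp x} \<in> G1" "y \<in> Cy - {comp x}" using u1 by auto
    obtain D1 where D1: "D1 \<in> G1" "comp y \<in> D1"
      using no_pure[OF mu1 a1] by blast
    have a2: "C - {comp y} \<in> G2" "x \<in> C - {comp y}" using u2 by auto
    obtain D2 where D2: "D2 \<in> G2" "comp x \<in> D2"
      using no_pure[OF mu2 a2] by blast
    have st1: "sDP_step G1 (asg y G1)" using step_from[OF s1 u1 D1] .
    have st2: "sDP_step G2 (asg x G2)" using step_from[OF s2 u2 D2] .
    have "asg y G1 = asg x G2" using x(3) y(3) asg_comm[OF False] by simp
    thus ?thesis using st1 st2 by auto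
  qed
qed

lemma reach_sat: "sDP_step\<^sup>*\<^sup>* F G \<Longrightarrow> saturated F \<Longrightarrow> saturated G"
  by (induction rule: rtranclp_induct) (auto intro: step_sat)

lemma nonsing_iff: "saturated F \<Longrightarrow> nonsingular F \<longleftrightarrow> (\<forall>G. \<not> sDP_step F G)"
  unfolding nonsingular_def sDP_step_def saturated_def by blast

lemma unique_nf:
  "saturated F \<Longrightarrow> \<exists>N. {N'. sDP_step\<^sup>*\<^sup>* F N' \<and> nonsingular N'} = {N}"
proof (induction "card (var_cs F)" arbitrary: F rule: less_induct)
  case less
  let ?S = "\<lambda>F. {N'. sDP_step\<^sup>*\<^sup>* F N' \<and> nonsingular N'}"
  show ?case
  proof (cases "nonsingular F")
    case True
    hence ns: "\<forall>G. \<not> sDP_step F G" using nonsing_iff[OF less.prems] by blast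
    have "?S F = {F}"
    proof (rule set_eqI, rule iffI)
      fix N assume "N \<in> ?S F"
      hence "sDP_step\<^sup>*\<^sup>* F N" by simp
      thus "N \<in> {F}" using ns by (cases rule: converse_rtranclpE) auto
    next
      fix N assume "N \<in> {F}" thus "N \<in> ?S F" using True by simp
    qed
    thus ?thesis by blast
  next
    case False
    then obtain G where st: "sDP_step F G" using nonsing_iff[OF less.prems] by blast
    have IH: "\<And>G. sDP_step F G \<Longrightarrow> \<exists>N. ?S G = {N}"
      using less step_card step_sat by blast
    obtain N where N: "?S G = {N}" using IH[OF st] by blast
    have "?S F = {N}"
    proof (rule set_eqI, rule iffI)
      fix N' assume h: "N' \<in> ?S F"
      hence r: "sDP_step\<^sup>*\<^sup>* F N'" "nonsingular N'" by auto
      from r(1) show "N' \<in> {N}"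
      proof (cases rule: converse_rtranclpE)
        case base thus ?thesis using r(2) False by simp
      next
        case (step G')
        obtain N2 where N2: "?S G' = {N2}" using IH[OF step(1)] by blast
        have "N' \<in> ?S G'" using step(2) r(2) by simp
        hence "N' = N2" using N2 by blast
        have "G = G' \<or> (\<exists>H. sDP_step G H \<and> sDP_step G' H)"
          using diamond[OF less.prems st step(1)] .
        thus ?thesis
        proof
          assume "G = G'" thus ?thesis using N N2 \<open>N' = N2\<close> by simp
        next
          assume "\<exists>H. sDP_step G H \<and> sDP_step G' H"
          then obtain H where H: "sDP_step G H" "sDP_step G' H" by blast
          have sG: "saturated G" using step_sat[OF less.prems st] .
          have "card (var_cs H) < card (var_cs F)"
            using step_card[OF sG H(1)] step_card[OF less.prems st] by simp
          moreover have "saturated H" using step_sat[OF sG H(1)] .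
          ultimately obtain M where M: "?S H = {M}" using less by blast
          have "M \<in> ?S H" using M by simp
          hence "M \<in> ?S G" "M \<in> ?S G'" using H
            by (auto intro: converse_rtranclp_into_rtranclp)
          thus ?thesis using N N2 \<open>N' = N2\<close> by simp
        qed
      qed
    next
      fix N' assume "N' \<in> {N}"
      hence "N' \<in> ?S G" using N by simp
      thus "N' \<in> ?S F" using st by (auto intro: converse_rtranclp_into_rtranclp)
    qed
    thus ?thesis by blast
  qed
qed

theorem theorem23:
  fixes F :: "'v cls"
  assumes "F \<in> MU" and "saturated F"
  shows "card (sDP F) = 1"
proof -
  obtain N where N: "{N'. sDP_step\<^sup>*\<^sup>* F N' \<and> nonsingular N'} = {N}"
    using unique_nf[OF assms(2)] by blast
  have "sDP F = {N'. sDP_step\<^sup>*\<^sup>* F N' \<and> nonsingular N'}"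
    unfolding sDP_def using reach_sat[OF _ assms(2)] by (auto simp: saturated_def)
  thus ?thesis using N by simp
qed


end
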